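(* Let $u$ be a word, let $s$ be a nonempty factor of $u$, and let $w$ be the shortest element of $\mathrm{Nodes}(u)$ such that $s$ is a prefix of $w$. Then $s$ is a seed of $u$ if and only if $|s|\ge\Delta(w)$ and $s$ is a border seed of $u$.
   Context: For a factor $v$ of $u$, $\mathrm{Occ}(v,u)$ is the set of starting positions of occurrences of $v$ in $u$, $\mathit{first}(v)=\min\mathrm{Occ}(v,u)$, $\mathit{last}(v)=\max\mathrm{Occ}(v,u)$. For a finite set $X$ of integers, $\mathrm{maxgap}(X)$ is the maximum of $b-a$ over consecutive elements $a<b$ of $X$, or $0$ if $|X|\le1$; $\mathrm{maxgap}(v)=\mathrm{maxgap}(\mathrm{Occ}(v,u))$. $\mathrm{Nodes}(u)$ is the set of factors of $u$ corresponding to explicit nodes of the suffix tree of $u$ (the root, the branching nodes and the leaves). For $w\in\mathrm{Nodes}(u)$, $\Delta(w)=\max\{\mathrm{maxgap}(x): x \text{ a prefix of } w\}$. A word $s$ covers $y$ if every position of $y$ lies in some occurrence of $s$ in $y$. A seed of $u$ is a factor $s$ of $u$ such that $u$ is a factor of some word covered by $s$. Writing $u=w_1w_2w_3$ with $w_2=u[\mathit{first}(s)..\mathit{last}(s)+|s|-1]$, $s$ is a border seed of $u$ if $s$ is a seed of $w_1\,s\,w_3$. *)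

theory Defs
  imports "HOL-Library.Sublist"
begin

text \<open>Words are lists; positions are 0-based. Factor = contiguous sublist.\<close>

definition Occ :: "'a list \<Rightarrow> 'a list \<Rightarrow> nat set" where
  "Occ v u = {i. i + length v \<le> length u \<and> take (length v) (drop i u) = v}"

definition first_occ :: "'a list \<Rightarrow> 'a list \<Rightarrow> nat" where
  "first_occ v u = Min (Occ v u)"

definition last_occ :: "'a list \<Rightarrow> 'a list \<Rightarrow> nat" where
  "last_occ v u = Max (Occ v u)"

definition maxgap_set :: "nat set \<Rightarrow> nat" where
  "maxgap_set X = (if card X \<le> 1 then 0 else
     Max {b - a | a b. a \<in> X \<and> b \<in> X \<and> a < b \<and> \<not> (\<exists>c\<in>X. a < c \<and> c < b)})"

definition maxgap :: "'a list \<Rightarrow> 'a list \<Rightarrow> nat" where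
  "maxgap v u = maxgap_set (Occ v u)"

text \<open>Explicit nodes of the suffix tree of u: the root (empty word), and the
  factors with a number of distinct right extensions different from one
  (branching nodes: at least two; leaves: none).\<close>
definition Nodes :: "'a list \<Rightarrow> 'a list set" where
  "Nodes u = {[]} \<union> {v. sublist v u \<and> card {a. sublist (v @ [a]) u} \<noteq> 1}"

definition Delta :: "'a list \<Rightarrow> 'a list \<Rightarrow> nat" where
  "Delta w u = Max {maxgap x u | x. prefix x w}"

definition covers :: "'a list \<Rightarrow> 'a list \<Rightarrow> bool" where
  "covers s y = (\<forall>i < length y. \<exists>j \<in> Occ s y. j \<le> i \<and> i < j + length s)"

definition seed :: "'a list \<Rightarrow> 'a list \<Rightarrow> bool" where
  "seed s u = (sublist s u \<and> (\<exists>y. covers s y \<and> sublist u y))"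

definition border_seed :: "'a list \<Rightarrow> 'a list \<Rightarrow> bool" where
  "border_seed s u = seed s (take (first_occ s u) u @ s @ drop (last_occ s u + length s) u)"

end

theory Submission
  imports Defs
begin

lemma Occ_finite: "finite (Occ v u)"
  by (rule finite_subset[of _ "{..length u}"]) (auto simp: Occ_def)

lemma sublist_Occ: "sublist v u \<longleftrightarrow> (\<exists>i. i \<in> Occ v u)"
proof
  assume "sublist v u"
  then obtain p q where "u = p @ v @ q" by (auto simp: sublist_def)
  then have "length p \<in> Occ v u" by (simp add: Occ_def)
  then show "\<exists>i. i \<in> Occ v u" by blast
next
  assume "\<exists>i. i \<in> Occ v u"
  then obtain i where i: "i \<in> Occ v u" by blast
  have "u = take i u @ take (length v) (drop i u) @ drop (length v) (drop i u)" by (simp only: append_take_drop_id)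
  with i have "u = take i u @ v @ drop (length v) (drop i u)" by (simp add: Occ_def)
  then show "sublist v u" unfolding sublist_def by blast
qed

lemma Occ_shift: "i \<in> Occ v u \<Longrightarrow> length p + i \<in> Occ v (p @ u @ q)"
  by (simp add: Occ_def)

definition consec :: "nat set \<Rightarrow> nat \<Rightarrow> nat \<Rightarrow> bool" where
  "consec X a b \<longleftrightarrow> a \<in> X \<and> b \<in> X \<and> a < b \<and> \<not> (\<exists>c\<in>X. a < c \<and> c < b)"

lemma mg_ge:
  assumes "finite X" "consec X a b"
  shows "b - a \<le> maxgap_set X"
proof -
  have ab: "a \<in> X" "b \<in> X" "a < b" using assms(2) by (auto simp: consec_def)
  have "card {a, b} \<le> card X" using ab assms(1) by (intro card_mono) auto
  then have c: "\<not> card X \<le> 1" using ab by simp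
  let ?S = "{b - a | a b. a \<in> X \<and> b \<in> X \<and> a < b \<and> \<not> (\<exists>c\<in>X. a < c \<and> c < b)}"
  have "?S \<subseteq> (\<lambda>(a,b). b - a) ` (X \<times> X)" by auto
  then have "finite ?S" using assms(1) by (meson finite_SigmaI finite_imageI finite_subset)
  moreover have "b - a \<in> ?S" using assms(2) unfolding consec_def by blast
  ultimately show ?thesis using c unfolding maxgap_set_def by simp
qed

lemma mg_le:
  assumes "finite X" "\<And>a b. consec X a b \<Longrightarrow> b - a \<le> m"
  shows "maxgap_set X \<le> m"
proof (cases "card X \<le> 1")
  case True then show ?thesis by (simp add: maxgap_set_def)
next
  case False
  let ?S = "{b - a | a b. a \<in> X \<and> b \<in> X \<and> a < b \<and> \<not> (\<exists>c\<in>X. a < c \<and> c < b)}"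
  have "?S \<subseteq> (\<lambda>(a,b). b - a) ` (X \<times> X)" by auto
  then have fin: "finite ?S" using assms(1) by (meson finite_SigmaI finite_imageI finite_subset)
  have Xne: "X \<noteq> {}" using False by auto
  define a where "a = Min X"
  have aX: "a \<in> X" using Xne assms(1) by (simp add: a_def)
  have "X - {a} \<noteq> {}"
  proof
    assume "X - {a} = {}"
    then have "X \<subseteq> {a}" by auto
    then have "card X \<le> card {a}" by (intro card_mono) auto
    then have "card X \<le> 1" by simp
    with False show False by simp
  qed
  define b where "b = Min (X - {a})"
  have bX: "b \<in> X - {a}" using \<open>X - {a} \<noteq> {}\<close> assms(1) unfolding b_def by (intro Min_in) auto
  have "a \<le> b" using bX assms(1) by (simp add: a_def)
  then have ab: "a < b" using bX by auto
  have "consec X a b" unfolding consec_def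
  proof (intro conjI)
    show "\<not> (\<exists>c\<in>X. a < c \<and> c < b)"
    proof
      assume "\<exists>c\<in>X. a < c \<and> c < b"
      then obtain c where "c \<in> X" "a < c" "c < b" by blast
      then have "b \<le> c" using assms(1) unfolding b_def by (intro Min_le) auto
      with \<open>c < b\<close> show False by simp
    qed
  qed (use aX bX ab in auto)
  then have "b - a \<in> ?S" unfolding consec_def by blast
  then have Sne: "?S \<noteq> {}" by blast
  have "\<forall>x\<in>?S. x \<le> m" using assms(2) unfolding consec_def by blast
  then have "Max ?S \<le> m" using fin Sne by simp
  then show ?thesis using False by (simp add: maxgap_set_def)
qed

lemma gap_cover:
  assumes "finite X" "X \<noteq> {}" "maxgap_set X \<le> m" "Min X \<le> i" "i < Max X + m"
  shows "\<exists>j\<in>X. j \<le> i \<and> i < j + m"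
proof -
  define S where "S = {a\<in>X. a \<le> i}"
  have Sne: "S \<noteq> {}" "finite S" using assms Min_in unfolding S_def by auto
  define j where "j = Max S"
  have jS: "j \<in> S" using Sne by (simp add: j_def)
  show ?thesis
  proof (rule ccontr)
    assume "\<not> ?thesis"
    then have ji: "j + m \<le> i" using jS unfolding S_def by auto
    define T where "T = {b\<in>X. j < b}"
    have "Max X \<in> T" using assms ji unfolding T_def by auto
    then have Tne: "T \<noteq> {}" "finite T" using assms(1) unfolding T_def by auto
    define b where "b = Min T"
    have bT: "b \<in> T" using Tne by (simp add: b_def)
    have "consec X j b" unfolding consec_def
    proof (intro conjI)
      show "\<not> (\<exists>c\<in>X. j < c \<and> c < b)"
      proof
        assume "\<exists>c\<in>X. j < c \<and> c < b"
        then obtain c where "c \<in> X" "j < c" "c < b" by blast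
        then have "b \<le> c" using Tne unfolding b_def T_def by (intro Min_le) auto
        with \<open>c < b\<close> show False by simp
      qed
    qed (use jS bT in \<open>auto simp: S_def T_def\<close>)
    then have "b - j \<le> m" using mg_ge[OF assms(1)] assms(3) by fastforce
    then have "b \<in> S" using bT ji unfolding S_def T_def by auto
    then have "b \<le> j" using Sne unfolding j_def by simp
    with bT show False unfolding T_def by simp
  qed
qed


lemma take_left:
  assumes "j \<le> length X"
  shows "take (length s) (drop j (X @ s @ R)) = take (length s) (drop j X @ s)"
  using assms by (simp add: take_append)

lemma splice:
  assumes p1: "prefix s M1" and s1: "suffix s M1" and p2: "prefix s M2" and s2: "suffix s M2"
    and c1: "\<forall>i<length (X@M1@Z). (i < length X \<or> length X + length M1 \<le> i) \<longrightarrow>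
               (\<exists>j\<in>Occ s (X@M1@Z). j \<le> i \<and> i < j + length s)"
    and c2: "\<forall>i. length X \<le> i \<and> i < length X + length M2 \<longrightarrow>
               (\<exists>j\<in>Occ s (X@M2@Z). j \<le> i \<and> i < j + length s)"
  shows "covers s (X@M2@Z)"
  unfolding covers_def
proof (intro allI impI)
  fix i assume i: "i < length (X@M2@Z)"
  obtain R1 where R1: "M1 = s @ R1" using p1 by (auto simp: prefix_def)
  obtain R2 where R2: "M2 = s @ R2" using p2 by (auto simp: prefix_def)
  obtain L1 where L1: "M1 = L1 @ s" using s1 by (auto simp: suffix_def)
  obtain L2 where L2: "M2 = L2 @ s" using s2 by (auto simp: suffix_def)
  consider "i < length X" | "length X \<le> i \<and> i < length X + length M2" | "length X + length M2 \<le> i" by linarith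
  then show "\<exists>j\<in>Occ s (X @ M2 @ Z). j \<le> i \<and> i < j + length s"
  proof cases
    case 1
    then obtain j where j: "j \<in> Occ s (X@M1@Z)" "j \<le> i" "i < j + length s"
      using c1[rule_format, of i] 1 by auto
    have "take (length s) (drop j (X@M1@Z)) = s" using j(1) by (simp add: Occ_def)
    then have "take (length s) (drop j X @ s) = s"
      using take_left[of j X s "R1 @ Z"] 1 j(2) by (simp add: R1)
    then have "take (length s) (drop j (X@M2@Z)) = s"
      using take_left[of j X s "R2 @ Z"] 1 j(2) by (simp add: R2)
    moreover have "j + length s \<le> length (X@M2@Z)" using 1 j(2) by (simp add: R2)
    ultimately have "j \<in> Occ s (X@M2@Z)" by (simp add: Occ_def)
    then show ?thesis using j by blast
  next
    case 2 then show ?thesis using c2 by blast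
  next
    case 3
    define i1 where "i1 = i - length M2 + length M1"
    have i1: "i1 < length (X@M1@Z)" "length X + length M1 \<le> i1"
      using i 3 unfolding i1_def by auto
    then obtain j where j: "j \<in> Occ s (X@M1@Z)" "j \<le> i1" "i1 < j + length s"
      using c1 by blast
    have lens: "length M1 = length L1 + length s" "length M2 = length L2 + length s"
      by (simp_all add: L1 L2)
    have jge: "length X + length L1 \<le> j" using i1 j lens by linarith
    define d where "d = j - (length X + length L1)"
    define j2 where "j2 = length X + length L2 + d"
    have D1: "drop j (X@M1@Z) = drop d (s @ Z)"
      using jge by (simp add: L1 d_def)
    have D2: "drop j2 (X@M2@Z) = drop d (s @ Z)"
      by (simp add: L2 j2_def)
    have "take (length s) (drop j (X@M1@Z)) = s" using j(1) by (simp add: Occ_def)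
    then have "take (length s) (drop j2 (X@M2@Z)) = s" by (simp only: D1 D2)
    moreover have "j + length s \<le> length (X@M1@Z)" using j(1) unfolding Occ_def by blast
    then have "j2 + length s \<le> length (X@M2@Z)"
      using jge lens unfolding j2_def d_def by simp
    ultimately have "j2 \<in> Occ s (X@M2@Z)" by (simp add: Occ_def)
    moreover have "j2 \<le> i" "i < j2 + length s"
      using j jge lens 3 unfolding i1_def j2_def d_def by linarith+
    ultimately show ?thesis by blast
  qed
qed

lemma extend_occ:
  assumes "s \<noteq> []" "w \<in> Nodes u" "prefix s w"
    and min: "\<forall>w'\<in>Nodes u. prefix s w' \<longrightarrow> length w \<le> length w'"
    and iO: "i \<in> Occ s u"
  shows "length s \<le> k \<Longrightarrow> k \<le> length w \<Longrightarrow> i + k \<le> length u \<Longrightarrow> i \<in> Occ (take k w) u"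
proof (induction k)
  case 0 then show ?case using assms(1) by simp
next
  case (Suc k)
  show ?case
  proof (cases "length s = Suc k")
    case True
    have "take (length s) w = s" using assms(3) by (auto simp: prefix_def)
    then show ?thesis using True iO by simp
  next
    case False
    then have sk: "length s \<le> k" using Suc.prems by simp
    define x where "x = take k w"
    have IH: "i \<in> Occ x u" using Suc sk unfolding x_def by simp
    have kw: "k < length w" using Suc.prems by simp
    have "take (length s) w = s" using assms(3) by (auto simp: prefix_def)
    then have "take (length s) x = s" using sk unfolding x_def by (metis min_absorb1 take_take)
    then have psx: "prefix s x" by (metis take_is_prefix)
    have xnode: "x \<notin> Nodes u"
    proof
      assume "x \<in> Nodes u"
      then have "length w \<le> length x" using min psx by blast
      with kw show False unfolding x_def by simp
    qed
    have wne: "w \<noteq> []" using assms(1,3) by auto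
    then have swu: "sublist w u" using assms(2) by (auto simp: Nodes_def)
    have xne: "x \<noteq> []" using sk kw assms(1) unfolding x_def by (cases s) auto
    have "sublist x u" using swu unfolding x_def
      by (meson prefix_imp_sublist sublist_order.order_trans take_is_prefix)
    then have card1: "card {a. sublist (x @ [a]) u} = 1" using xnode xne by (simp add: Nodes_def)
    have xw: "x @ [w ! k] = take (Suc k) w" using kw unfolding x_def by (simp add: take_Suc_conv_app_nth)
    have "sublist (x @ [w ! k]) u" using swu unfolding xw
      by (meson prefix_imp_sublist sublist_order.order_trans take_is_prefix)
    moreover
    have xk: "take k (drop i u) = x" using IH sk kw by (simp add: Occ_def x_def)
    have ik: "i + k < length u" using Suc.prems by simp
    have xu: "x @ [u ! (i+k)] = take (Suc k) (drop i u)"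
      using ik xk by (simp add: take_Suc_conv_app_nth)
    have "i \<in> Occ (x @ [u ! (i+k)]) u" using ik unfolding xu by (simp add: Occ_def)
    then have "sublist (x @ [u ! (i+k)]) u" using sublist_Occ by blast
    ultimately have "u ! (i+k) = w ! k" using card1
      by (metis (mono_tags, lifting) card_1_singletonE mem_Collect_eq singletonD)
    then have "take (Suc k) w = take (Suc k) (drop i u)" using xw xu by simp
    then show ?thesis using Suc.prems by (simp add: Occ_def)
  qed
qed


lemma Delta_finite: "finite {maxgap x u | x. prefix x w}"
proof -
  have "{maxgap x u | x. prefix x w} = (\<lambda>x. maxgap x u) ` set (prefixes w)" by auto
  then show ?thesis by simp
qed

theorem lemma4:
  fixes u s w :: "'a list"
  assumes "s \<noteq> []" and "sublist s u"
    and "w \<in> Nodes u" and "prefix s w"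
    and "\<forall>w' \<in> Nodes u. prefix s w' \<longrightarrow> length w \<le> length w'"
  shows "seed s u \<longleftrightarrow> (length s \<ge> Delta w u \<and> border_seed s u)"
proof -
  define f where "f = first_occ s u"
  define l where "l = last_occ s u"
  have fin: "finite (Occ s u)" by (rule Occ_finite)
  have ne: "Occ s u \<noteq> {}" using assms(2) sublist_Occ by blast
  have fO: "f \<in> Occ s u" using fin ne by (simp add: f_def first_occ_def)
  have lO: "l \<in> Occ s u" using fin ne by (simp add: l_def last_occ_def)
  have fl: "f \<le> l" using fin ne fO unfolding l_def last_occ_def by simp
  have lm: "l + length s \<le> length u" using lO by (simp add: Occ_def)
  have fs: "take (length s) (drop f u) = s" using fO by (simp add: Occ_def)
  have ls: "take (length s) (drop l u) = s" using lO by (simp add: Occ_def)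
  define A where "A = take f u"
  define B where "B = drop (l + length s) u"
  define M where "M = take (l + length s - f) (drop f u)"
  have lenA: "length A = f" using fl lm by (simp add: A_def)
  have lenM: "length M = l + length s - f" using fl lm by (simp add: M_def)
  have uAMB: "u = A @ M @ B"
  proof -
    have "drop f u = M @ drop (l + length s - f) (drop f u)" unfolding M_def by (simp only: append_take_drop_id)
    also have "drop (l + length s - f) (drop f u) = B" using fl by (simp add: B_def)
    finally have "drop f u = M @ B" .
    then show ?thesis unfolding A_def by (metis append_take_drop_id)
  qed
  have pM: "prefix s M"
  proof -
    have "length s \<le> l + length s - f" using fl by simp
    then have "take (length s) M = s" using fs unfolding M_def by (simp add: min_def)
    then show ?thesis by (metis take_is_prefix)
  qed
  have sM: "suffix s M"
  proof -
    have "drop (l - f) M = take (length s) (drop l u)" using fl unfolding M_def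
      by (simp add: drop_take add.commute)
    then have "drop (l - f) M = s" using ls by simp
    then show ?thesis unfolding suffix_def by (metis append_take_drop_id)
  qed
  have bs_iff: "border_seed s u = seed s (A @ s @ B)"
    unfolding border_seed_def A_def B_def f_def l_def by simp
  have mgD: "maxgap x u \<le> Delta w u" if "prefix x w" for x
    unfolding Delta_def using Delta_finite that by (intro Max_ge) auto
  show ?thesis
  proof
    assume sd: "seed s u"
    then obtain y where cov: "covers s y" and uy: "sublist u y" by (auto simp: seed_def)
    then obtain P Q where y: "y = P @ u @ Q" by (auto simp: sublist_def)
    have covy: "\<forall>i<length y. \<exists>j\<in>Occ s y. j \<le> i \<and> i < j + length s"
      using cov by (simp add: covers_def)
    have "covers s ((P @ A) @ s @ (B @ Q))"
    proof (rule splice[OF pM sM])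
      show "prefix s s" by simp
      show "suffix s s" by simp
      show "\<forall>i<length ((P @ A) @ M @ B @ Q). (i < length (P @ A) \<or> length (P @ A) + length M \<le> i) \<longrightarrow>
          (\<exists>j\<in>Occ s ((P @ A) @ M @ B @ Q). j \<le> i \<and> i < j + length s)"
        using covy unfolding y uAMB by simp
      show "\<forall>i. length (P @ A) \<le> i \<and> i < length (P @ A) + length s \<longrightarrow>
          (\<exists>j\<in>Occ s ((P @ A) @ s @ B @ Q). j \<le> i \<and> i < j + length s)"
      proof (intro allI impI)
        fix i assume "length (P @ A) \<le> i \<and> i < length (P @ A) + length s"
        moreover have "length (P @ A) \<in> Occ s ((P @ A) @ s @ B @ Q)" by (simp add: Occ_def)
        ultimately show "\<exists>j\<in>Occ s ((P @ A) @ s @ B @ Q). j \<le> i \<and> i < j + length s" by blast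
      qed
    qed
    moreover have "sublist (A @ s @ B) ((P @ A) @ s @ (B @ Q))"
      by (metis append.assoc sublist_appendI)
    moreover have "sublist s (A @ s @ B)" by simp
    ultimately have "seed s (A @ s @ B)" unfolding seed_def by blast
    then have bs: "border_seed s u" using bs_iff by simp
    have gap: "b - a \<le> length s" if px: "prefix x w" and cab: "consec (Occ x u) a b" for x a b
    proof (rule ccontr)
      assume "\<not> b - a \<le> length s"
      then have bam: "a + length s < b" by simp
      have bO: "b + length x \<le> length u" using cab by (simp add: consec_def Occ_def)
      define t where "t = length P + a + length s"
      have "t < length y" using bam bO unfolding t_def y by simp
      then obtain j where jO: "j \<in> Occ s y" and jt: "j \<le> t" "t < j + length s" using covy by blast
      define j' where "j' = j - length P"
      have jP: "length P + a < j" using jt unfolding t_def by simp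
      have j'b: "a < j'" "j' < b" using jP jt bam unfolding j'_def t_def by auto
      have "j \<le> length P + length u" using jt bam bO unfolding t_def by simp
      then have dj: "drop j y = drop j' u @ Q" using jP unfolding y j'_def by simp
      have tjs: "take (length s) (drop j y) = s" using jO by (simp add: Occ_def)
      have "j' \<in> Occ x u"
      proof (cases "length x \<le> length s")
        case True
        have "prefix x s" using px assms(4) True prefix_length_prefix by blast
        then have xs: "take (length x) s = x" by (auto simp: prefix_def)
        have "j' + length x \<le> length u" using j'b bO by simp
        moreover have "take (length x) (drop j y) = x"
          using tjs xs True by (metis min_absorb1 take_take)
        then have "take (length x) (drop j' u) = x"
          using calculation unfolding dj by (simp add: take_append)
        ultimately show ?thesis by (simp add: Occ_def)
      next
        case False
        have len: "j' + length x \<le> length u" using j'b bO by simp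
        then have "take (length s) (drop j' u) = s" using tjs False unfolding dj by (simp add: min_def)
        then have "j' \<in> Occ s u" using len False by (simp add: Occ_def)
        then have "j' \<in> Occ (take (length x) w) u"
          using extend_occ[OF assms(1,3,4,5)] False len prefix_length_le[OF px] by simp
        moreover have "take (length x) w = x" using px by (auto simp: prefix_def)
        ultimately show ?thesis by simp
      qed
      with j'b cab show False unfolding consec_def by blast
    qed
    have "Delta w u \<le> length s"
      unfolding Delta_def
    proof (subst Max_le_iff)
      show "finite {maxgap x u |x. prefix x w}" by (rule Delta_finite)
      show "{maxgap x u |x. prefix x w} \<noteq> {}" by auto
      show "\<forall>a\<in>{maxgap x u |x. prefix x w}. a \<le> length s"
      proof
        fix a assume "a \<in> {maxgap x u |x. prefix x w}"
        then obtain x where a: "a = maxgap x u" and px: "prefix x w" by blast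
        show "a \<le> length s" unfolding a maxgap_def
          by (rule mg_le[OF Occ_finite]) (rule gap[OF px])
      qed
    qed
    with bs show "length s \<ge> Delta w u \<and> border_seed s u" by simp
  next
    assume "length s \<ge> Delta w u \<and> border_seed s u"
    then have D: "Delta w u \<le> length s" and bs: "border_seed s u" by auto
    have mg: "maxgap_set (Occ s u) \<le> length s" using mgD[OF assms(4)] D by (simp add: maxgap_def)
    obtain y' where cov: "covers s y'" and uy: "sublist (A @ s @ B) y'"
      using bs bs_iff by (auto simp: seed_def)
    then obtain P Q where y': "y' = P @ (A @ s @ B) @ Q" by (auto simp: sublist_def)
    have covy: "\<forall>i<length y'. \<exists>j\<in>Occ s y'. j \<le> i \<and> i < j + length s"
      using cov by (simp add: covers_def)
    have "covers s ((P @ A) @ M @ (B @ Q))"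
    proof (rule splice[OF _ _ pM sM])
      show "prefix s s" by simp
      show "suffix s s" by simp
      show "\<forall>i<length ((P @ A) @ s @ B @ Q). (i < length (P @ A) \<or> length (P @ A) + length s \<le> i) \<longrightarrow>
          (\<exists>j\<in>Occ s ((P @ A) @ s @ B @ Q). j \<le> i \<and> i < j + length s)"
        using covy unfolding y' by simp
      show "\<forall>i. length (P @ A) \<le> i \<and> i < length (P @ A) + length M \<longrightarrow>
          (\<exists>j\<in>Occ s ((P @ A) @ M @ B @ Q). j \<le> i \<and> i < j + length s)"
      proof (intro allI impI)
        fix i assume i: "length (P @ A) \<le> i \<and> i < length (P @ A) + length M"
        define i' where "i' = i - length P"
        have "Min (Occ s u) \<le> i'" "i' < Max (Occ s u) + length s"
          using i lenA lenM fl unfolding i'_def f_def[symmetric] l_def[symmetric] 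
          by (auto simp: f_def l_def first_occ_def last_occ_def)
        then obtain j where j: "j \<in> Occ s u" "j \<le> i'" "i' < j + length s"
          using gap_cover[OF fin ne mg] by blast
        have "length P + j \<in> Occ s (P @ u @ Q)" using Occ_shift[OF j(1)] .
        moreover have "P @ u @ Q = (P @ A) @ M @ B @ Q" using uAMB by simp
        moreover have "length P + j \<le> i" "i < length P + j + length s"
          using j i unfolding i'_def by auto
        ultimately show "\<exists>j\<in>Occ s ((P @ A) @ M @ B @ Q). j \<le> i \<and> i < j + length s" by metis
      qed
    qed
    then have "covers s (P @ u @ Q)" using uAMB by simp
    then show "seed s u" unfolding seed_def using assms(2) by blast
  qed
qed

end
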